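(* Under the full-support assumption and with $\eta L<\tfrac12$, for every $t\ge1$, \[ \Theta_t-\Theta_{t+1}\ge C_1\max\{\hat K^{(t+1)},K^{(t+1)}\}^2,\qquad C_1=\frac{1-4\eta^2L^2}{(\sqrt2\,\eta L+2e^{2\eta L})^2}. \]
   Context: $\mathbb{A}$ finite, $\Delta(\mathbb{A})$ the simplex, $\bm P$ skew-symmetric, $L=\max_{a,a'}|P_{a,a'}|$. $\mathbb{M}$: Nash equilibria, i.e. ${\bm\pi}\in\Delta(\mathbb{A})$ with $\max_a(\bm P{\bm\pi})_a\le0$. Full-support assumption: every $a$ has some ${\bm\pi}\in\mathbb{M}$ with $\pi_a>0$. $p({\bm\pi})=\arg\min_{{\bm\pi}'\in\mathbb{M}}D_{\mathrm{KL}}({\bm\pi}'\|{\bm\pi})$ for positive ${\bm\pi}$. OMWU with $\eta>0$: $\hat{\bm\pi}^{(1)}$ positive, ${\bm\pi}^{(0)}=\hat{\bm\pi}^{(1)}$, for $t\ge1$ $\pi^{(t)}_a\propto\hat\pi^{(t)}_a e^{\eta(\bm P{\bm\pi}^{(t-1)})_a}$, $\hat\pi^{(t+1)}_a\propto\hat\pi^{(t)}_a e^{\eta(\bm P{\bm\pi}^{(t)})_a}$ (normalized). ${\bm\pi}^*=p(\hat{\bm\pi}^{(1)})$. $\Theta_t=D_{\mathrm{KL}}({\bm\pi}^*\|\hat{\bm\pi}^{(t)})+4\eta^2L^2D_{\mathrm{KL}}(\hat{\bm\pi}^{(t)}\|{\bm\pi}^{(t-1)})$. $K^{(t)}=\max_a\hat\pi^{(t)}_a|\eta(\bm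 P{\bm\pi}^{(t-1)})_a|$ (so $K^{(t+1)}=\max_a\hat\pi^{(t+1)}_a|\eta(\bm P{\bm\pi}^{(t)})_a|$), $\hat K^{(t+1)}=\max_a\hat\pi^{(t)}_a|\eta(\bm P{\bm\pi}^{(t)})_a|$. *)

theory Defs
  imports "HOL-Analysis.Analysis"
begin

definition prob_simplex :: "('a::finite \<Rightarrow> real) set" where
  "prob_simplex = {\<pi>. (\<forall>a. 0 \<le> \<pi> a) \<and> (\<Sum>a\<in>UNIV. \<pi> a) = 1}"

definition skew_symmetric :: "('a \<Rightarrow> 'a \<Rightarrow> real) \<Rightarrow> bool" where
  "skew_symmetric P \<longleftrightarrow> (\<forall>a b. P a b = - P b a)"

definition matvec :: "('a::finite \<Rightarrow> 'a \<Rightarrow> real) \<Rightarrow> ('a \<Rightarrow> real) \<Rightarrow> 'a \<Rightarrow> real" where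
  "matvec P \<pi> a = (\<Sum>b\<in>UNIV. P a b * \<pi> b)"

definition Lconst :: "('a::finite \<Rightarrow> 'a \<Rightarrow> real) \<Rightarrow> real" where
  "Lconst P = Max {\<bar>P a b\<bar> | a b. True}"

definition nash_set :: "('a::finite \<Rightarrow> 'a \<Rightarrow> real) \<Rightarrow> ('a \<Rightarrow> real) set" where
  "nash_set P = {\<pi> \<in> prob_simplex. Max (range (matvec P \<pi>)) \<le> 0}"

definition KL :: "('a::finite \<Rightarrow> real) \<Rightarrow> ('a \<Rightarrow> real) \<Rightarrow> real" where
  "KL p q = (\<Sum>a\<in>UNIV. if p a = 0 then 0 else p a * ln (p a / q a))"

definition kl_proj :: "('a::finite \<Rightarrow> 'a \<Rightarrow> real) \<Rightarrow> ('a \<Rightarrow> real) \<Rightarrow> ('a \<Rightarrow> real)" where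
  "kl_proj P \<pi> = (SOME \<pi>'. is_arg_min (\<lambda>\<sigma>. KL \<sigma> \<pi>) (\<lambda>\<sigma>. \<sigma> \<in> nash_set P) \<pi>')"

definition mw_step :: "real \<Rightarrow> ('a::finite \<Rightarrow> 'a \<Rightarrow> real) \<Rightarrow> ('a \<Rightarrow> real) \<Rightarrow> ('a \<Rightarrow> real) \<Rightarrow> 'a \<Rightarrow> real" where
  "mw_step \<eta> P base \<sigma> a =
     base a * exp (\<eta> * matvec P \<sigma> a) / (\<Sum>b\<in>UNIV. base b * exp (\<eta> * matvec P \<sigma> b))"

text \<open>Potential Theta_t, given hat pi^(t) and pi^(t-1).\<close>
definition Theta :: "real \<Rightarrow> real \<Rightarrow> ('a::finite \<Rightarrow> real) \<Rightarrow> ('a \<Rightarrow> real) \<Rightarrow> ('a \<Rightarrow> real) \<Rightarrow> real" where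
  "Theta \<eta> L \<pi>s hat prev = KL \<pi>s hat + 4 * \<eta>^2 * L^2 * KL hat prev"

text \<open>max_a w_a |eta (P sigma)_a|, used for K^(t) (w = hat pi^(t), sigma = pi^(t-1))
  and hat K^(t+1) (w = hat pi^(t), sigma = pi^(t)).\<close>
definition Kval :: "real \<Rightarrow> ('a::finite \<Rightarrow> 'a \<Rightarrow> real) \<Rightarrow> ('a \<Rightarrow> real) \<Rightarrow> ('a \<Rightarrow> real) \<Rightarrow> real" where
  "Kval \<eta> P w \<sigma> = Max (range (\<lambda>a. w a * \<bar>\<eta> * matvec P \<sigma> a\<bar>))"

end

theory Submission
  imports Defs "HOL-Real_Asymp.Real_Asymp" "HOL-Probability.Hoeffding"
begin


lemma KL_alt: "KL p q = (\<Sum>a\<in>UNIV. p a * ln (p a / q a))"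
  unfolding KL_def by (intro sum.cong) auto

lemma KL_self: "KL p p = 0"
  unfolding KL_alt by (intro sum.neutral) (auto simp: divide_self_if)

lemma simplexD: assumes "p \<in> prob_simplex" shows "\<And>a. 0 \<le> p a" "(\<Sum>a\<in>UNIV. p a) = 1"
  using assms by (auto simp: prob_simplex_def)

lemma simplex_le1: assumes "p \<in> prob_simplex" shows "p a \<le> 1"
proof -
  have "p a \<le> (\<Sum>b\<in>UNIV. p b)" by (rule member_le_sum) (auto simp: simplexD[OF assms])
  thus ?thesis using simplexD[OF assms] by simp
qed

lemma KL_nonneg:
  assumes p: "p \<in> prob_simplex" and q: "q \<in> prob_simplex" and qpos: "\<forall>a. q a > 0"
  shows "KL p q \<ge> 0"
proof -
  have "p a - q a \<le> p a * ln (p a / q a)" for a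
  proof (cases "p a = 0")
    case True thus ?thesis using qpos by (simp add: less_imp_le)
  next
    case False
    hence pa: "p a > 0" using simplexD(1)[OF p, of a] by simp
    have "ln (q a / p a) \<le> q a / p a - 1" using qpos pa by (intro ln_le_minus_one) auto
    moreover have "ln (q a / p a) = - ln (p a / q a)" using qpos pa by (simp add: ln_div)
    ultimately have "1 - q a / p a \<le> ln (p a / q a)" by simp
    hence "p a * (1 - q a / p a) \<le> p a * ln (p a / q a)" using pa by (intro mult_left_mono) auto
    moreover have "p a * (1 - q a / p a) = p a - q a" using pa by (simp add: field_simps)
    ultimately show ?thesis by simp
  qed
  hence "(\<Sum>a\<in>UNIV. p a - q a) \<le> KL p q" unfolding KL_alt by (intro sum_mono) auto
  moreover have "(\<Sum>a\<in>UNIV. p a - q a) = 0" using simplexD[OF p] simplexD[OF q] by (simp add: sum_subtractf)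
  ultimately show ?thesis by simp
qed

lemma softmax_pos:
  fixes h :: "'a::finite \<Rightarrow> real"
  assumes "\<forall>a. h a > 0"
  shows "(\<Sum>b\<in>UNIV. h b * exp (y b)) > 0"
  using assms by (intro sum_pos) auto

lemma softmax_simplex:
  fixes h :: "'a::finite \<Rightarrow> real"
  assumes "\<forall>a. h a > 0"
  shows "(\<lambda>a. h a * exp (y a) / (\<Sum>b\<in>UNIV. h b * exp (y b))) \<in> prob_simplex"
    and "\<forall>a. h a * exp (y a) / (\<Sum>b\<in>UNIV. h b * exp (y b)) > 0"
proof -
  have Z: "(\<Sum>b\<in>UNIV. h b * exp (y b)) > 0" by (rule softmax_pos[OF assms])
  show "\<forall>a. h a * exp (y a) / (\<Sum>b\<in>UNIV. h b * exp (y b)) > 0"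
    using Z assms by auto
  thus "(\<lambda>a. h a * exp (y a) / (\<Sum>b\<in>UNIV. h b * exp (y b))) \<in> prob_simplex"
    using Z unfolding prob_simplex_def by (auto simp: sum_divide_distrib[symmetric] less_imp_le)
qed

lemma KL_softmax:
  fixes h u :: "'a::finite \<Rightarrow> real"
  assumes u: "u \<in> prob_simplex" and h: "\<forall>a. h a > 0"
  shows "KL u (\<lambda>a. h a * exp (y a) / (\<Sum>b\<in>UNIV. h b * exp (y b)))
       = KL u h - (\<Sum>a\<in>UNIV. u a * y a) + ln (\<Sum>b\<in>UNIV. h b * exp (y b))"
proof -
  define Z where "Z = (\<Sum>b\<in>UNIV. h b * exp (y b))"
  have Z: "Z > 0" unfolding Z_def by (rule softmax_pos[OF h])
  have trm: "u a * ln (u a / (h a * exp (y a) / Z)) = u a * ln (u a / h a) - u a * y a + u a * ln Z" for a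
  proof (cases "u a = 0")
    case False
    hence ua: "u a > 0" using simplexD(1)[OF u, of a] by simp
    have "ln (u a / (h a * exp (y a) / Z)) = ln (u a / h a) - y a + ln Z"
    proof -
      have ha: "h a > 0" using h by auto
      have "u a / (h a * exp (y a) / Z) = (u a / h a) * (Z / exp (y a))" using ha Z by (simp add: field_simps)
      thus ?thesis using ua ha Z by (simp add: ln_div ln_mult)
    qed
    then show ?thesis unfolding ring_distribs(1)[symmetric] by (simp only:) (simp add: algebra_simps)
  qed simp
  have "KL u (\<lambda>a. h a * exp (y a) / Z) = (\<Sum>a\<in>UNIV. u a * ln (u a / h a) - u a * y a + u a * ln Z)"
    unfolding KL_alt using trm by simp
  also have "\<dots> = KL u h - (\<Sum>a\<in>UNIV. u a * y a) + (\<Sum>a\<in>UNIV. u a) * ln Z"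
    unfolding KL_alt by (simp add: sum.distrib sum_subtractf sum_distrib_right)
  finally show ?thesis using simplexD(2)[OF u] unfolding Z_def by simp
qed

lemma gibbs:
  fixes p q :: "'a::finite \<Rightarrow> real"
  assumes p: "p \<in> prob_simplex" and q: "\<forall>a. q a > 0"
  shows "(\<Sum>a\<in>UNIV. p a * y a) - ln (\<Sum>b\<in>UNIV. q b * exp (y b)) \<le> KL p q"
  using KL_nonneg[OF p softmax_simplex[OF q, of y]] KL_softmax[OF p q, of y] by simp

lemma sum_if_UNIV: "(\<Sum>a\<in>(UNIV::'a::finite set). if a \<in> A then f a else 0) = sum f A"
  using sum.inter_restrict[of "UNIV::'a set" f A] by simp

lemma pinsker:
  fixes p q :: "'a::finite \<Rightarrow> real"
  assumes p: "p \<in> prob_simplex" and q: "q \<in> prob_simplex" and qpos: "\<forall>a. q a > 0"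
  shows "(\<Sum>a\<in>UNIV. \<bar>p a - q a\<bar>)^2 \<le> 2 * KL p q"
proof -
  define A where "A = {a. q a \<le> p a}"
  define sp where "sp = (\<Sum>a\<in>A. p a)"
  define sq where "sq = (\<Sum>a\<in>A. q a)"
  define d where "d = sp - sq"
  have d0: "d \<ge> 0" unfolding d_def sp_def sq_def
    by (simp add: sum_subtractf[symmetric] A_def) (rule sum_nonneg, simp)
  have sq0: "sq \<ge> 0" unfolding sq_def using qpos by (simp add: sum_nonneg less_imp_le)
  have "(\<Sum>a\<in>UNIV. \<bar>p a - q a\<bar>) = (\<Sum>a\<in>UNIV. 2 * (if a \<in> A then p a - q a else 0) - (p a - q a))"
    by (intro sum.cong) (auto simp: A_def)
  also have "\<dots> = 2 * d"
    using simplexD(2)[OF p] simplexD(2)[OF q]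
    by (simp add: sum_subtractf sum_distrib_left[symmetric] sum_if_UNIV d_def sp_def sq_def)
  finally have L1: "(\<Sum>a\<in>UNIV. \<bar>p a - q a\<bar>) = 2 * d" .
  define l where "l = 4 * d"
  define y where "y = (\<lambda>a. if a \<in> A then l else 0)"
  have "(\<Sum>a\<in>UNIV. p a * y a) = (\<Sum>a\<in>UNIV. if a \<in> A then l * p a else 0)"
    by (intro sum.cong) (auto simp: y_def)
  also have "\<dots> = l * sp" by (simp add: sum_if_UNIV sum_distrib_left sp_def)
  finally have E1: "(\<Sum>a\<in>UNIV. p a * y a) = l * sp" .
  have "(\<Sum>b\<in>UNIV. q b * exp (y b)) = (\<Sum>b\<in>UNIV. q b + (if b \<in> A then (exp l - 1) * q b else 0))"
    by (intro sum.cong) (auto simp: y_def algebra_simps)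
  also have "\<dots> = 1 + sq * (exp l - 1)"
    using simplexD(2)[OF q] by (simp add: sum.distrib sum_if_UNIV sum_distrib_right sq_def mult.commute)
  finally have E2: "(\<Sum>b\<in>UNIV. q b * exp (y b)) = 1 + sq * (exp l - 1)" .
  have G: "l * sp - ln (1 + sq * (exp l - 1)) \<le> KL p q"
    using gibbs[OF p qpos, of y] E1 E2 by simp
  have H: "- l * sq + ln (1 + sq * (exp l - 1)) \<le> l^2 / 8"
    using Hoeffdings_lemma_aux[of l sq] d0 sq0 unfolding l_def by simp
  have "2 * d^2 \<le> KL p q" using G H unfolding l_def d_def by (simp add: power2_eq_square algebra_simps)
  thus ?thesis unfolding L1 by (simp add: power2_eq_square)
qed



lemma Lconst_ge: "\<bar>P a b\<bar> \<le> Lconst (P::'a::finite \<Rightarrow> 'a \<Rightarrow> real)"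
proof -
  have e: "{\<bar>P a b\<bar> | a b. True} = (\<lambda>(a,b). \<bar>P a b\<bar>) ` UNIV" by auto
  show ?thesis unfolding Lconst_def e by (rule Max_ge) auto
qed

lemma bilin_bound:
  fixes P :: "'a::finite \<Rightarrow> 'a \<Rightarrow> real"
  assumes L: "\<forall>a b. \<bar>P a b\<bar> \<le> L"
  shows "\<bar>\<Sum>a\<in>UNIV. x a * matvec P v a\<bar> \<le> L * (\<Sum>a\<in>UNIV. \<bar>x a\<bar>) * (\<Sum>b\<in>UNIV. \<bar>v b\<bar>)"
proof -
  have mv: "\<bar>matvec P v a\<bar> \<le> L * (\<Sum>b\<in>UNIV. \<bar>v b\<bar>)" for a
  proof -
    have "\<bar>matvec P v a\<bar> \<le> (\<Sum>b\<in>UNIV. \<bar>P a b * v b\<bar>)" unfolding matvec_def by (rule sum_abs)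
    also have "\<dots> \<le> (\<Sum>b\<in>UNIV. L * \<bar>v b\<bar>)"
      by (intro sum_mono) (simp add: abs_mult mult_right_mono L)
    finally show ?thesis by (simp add: sum_distrib_left)
  qed
  have "\<bar>\<Sum>a\<in>UNIV. x a * matvec P v a\<bar> \<le> (\<Sum>a\<in>UNIV. \<bar>x a * matvec P v a\<bar>)" by (rule sum_abs)
  also have "\<dots> \<le> (\<Sum>a\<in>UNIV. \<bar>x a\<bar> * (L * (\<Sum>b\<in>UNIV. \<bar>v b\<bar>)))"
    unfolding abs_mult by (intro sum_mono mult_left_mono mv) auto
  also have "\<dots> = (\<Sum>a\<in>UNIV. \<bar>x a\<bar>) * (L * (\<Sum>b\<in>UNIV. \<bar>v b\<bar>))"
    by (rule sum_distrib_right[symmetric])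
  finally show ?thesis by (simp add: mult_ac)
qed

lemma simplex_abs_sum: assumes "p \<in> prob_simplex" shows "(\<Sum>b\<in>UNIV. \<bar>p b\<bar>) = 1"
  using simplexD[OF assms] by simp

lemma matvec_bound:
  fixes P :: "'a::finite \<Rightarrow> 'a \<Rightarrow> real"
  assumes L: "\<forall>a b. \<bar>P a b\<bar> \<le> L" and s: "s \<in> prob_simplex"
  shows "\<bar>matvec P s a\<bar> \<le> L"
proof -
  have "\<bar>matvec P s a\<bar> \<le> (\<Sum>b\<in>UNIV. \<bar>P a b * s b\<bar>)" unfolding matvec_def by (rule sum_abs)
  also have "\<dots> \<le> (\<Sum>b\<in>UNIV. L * s b)"
    using simplexD(1)[OF s] by (intro sum_mono) (simp add: abs_mult mult_right_mono L)
  finally show ?thesis using simplexD(2)[OF s] by (simp add: sum_distrib_left[symmetric])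
qed

lemma skew_zero:
  fixes P :: "'a::finite \<Rightarrow> 'a \<Rightarrow> real"
  assumes "skew_symmetric P"
  shows "(\<Sum>a\<in>UNIV. q a * matvec P q a) = 0"
proof -
  define X where "X = (\<Sum>a\<in>UNIV. q a * matvec P q a)"
  have X1: "X = (\<Sum>a\<in>UNIV. \<Sum>b\<in>UNIV. q a * P a b * q b)"
    unfolding X_def matvec_def by (simp add: sum_distrib_left mult_ac)
  also have "\<dots> = (\<Sum>b\<in>UNIV. \<Sum>a\<in>UNIV. q a * P a b * q b)" by (rule sum.swap)
  also have "\<dots> = (\<Sum>b\<in>UNIV. \<Sum>a\<in>UNIV. - (q b * P b a * q a))"
  proof (intro sum.cong refl)
    fix a b
    have "P a b = - P b a" using assms unfolding skew_symmetric_def by blast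
    thus "q a * P a b * q b = - (q b * P b a * q a)" by simp
  qed
  also have "\<dots> = - X" unfolding X1 by (simp add: sum_negf)
  finally show ?thesis unfolding X_def by simp
qed

lemma nash_nonneg:
  fixes P :: "'a::finite \<Rightarrow> 'a \<Rightarrow> real"
  assumes sk: "skew_symmetric P" and n: "s \<in> nash_set P" and q: "q \<in> prob_simplex"
  shows "(\<Sum>a\<in>UNIV. s a * matvec P q a) \<ge> 0"
proof -
  have neg: "matvec P s b \<le> 0" for b
  proof -
    have "matvec P s b \<le> Max (range (matvec P s))" by (rule Max_ge) auto
    thus ?thesis using n unfolding nash_set_def by auto
  qed
  have "(\<Sum>a\<in>UNIV. s a * matvec P q a) = (\<Sum>a\<in>UNIV. \<Sum>b\<in>UNIV. s a * P a b * q b)"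
    unfolding matvec_def by (simp add: sum_distrib_left mult_ac)
  also have "\<dots> = (\<Sum>b\<in>UNIV. \<Sum>a\<in>UNIV. s a * P a b * q b)" by (rule sum.swap)
  also have "\<dots> = (\<Sum>b\<in>UNIV. q b * (- matvec P s b))"
  proof (intro sum.cong refl)
    fix b
    have "q b * (- matvec P s b) = (\<Sum>a\<in>UNIV. q b * (- (P b a * s a)))"
      unfolding matvec_def by (simp add: sum_distrib_left sum_negf)
    also have "\<dots> = (\<Sum>a\<in>UNIV. s a * P a b * q b)"
    proof (intro sum.cong refl)
      fix a
      have "P a b = - P b a" using sk unfolding skew_symmetric_def by blast
      thus "q b * (- (P b a * s a)) = s a * P a b * q b" by simp
    qed
    finally show "(\<Sum>a\<in>UNIV. s a * P a b * q b) = q b * (- matvec P s b)" by simp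
  qed
  also have "\<dots> \<ge> 0" using simplexD(1)[OF q] neg by (intro sum_nonneg) (simp add: mult_nonneg_nonpos)
  finally show ?thesis .
qed

lemma mw_simplex:
  fixes h :: "'a::finite \<Rightarrow> real"
  assumes "\<forall>a. h a > 0"
  shows "mw_step \<eta> P h s \<in> prob_simplex" "\<forall>a. mw_step \<eta> P h s a > 0"
  using softmax_simplex[OF assms, of "\<lambda>a. \<eta> * matvec P s a"]
  by (simp_all add: mw_step_def[abs_def])

lemma KL_mw:
  fixes h u :: "'a::finite \<Rightarrow> real"
  assumes u: "u \<in> prob_simplex" and h: "\<forall>a. h a > 0"
  shows "KL u (mw_step \<eta> P h s) = KL u h - \<eta> * (\<Sum>a\<in>UNIV. u a * matvec P s a)
           + ln (\<Sum>b\<in>UNIV. h b * exp (\<eta> * matvec P s b))"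
  using KL_softmax[OF u h, of "\<lambda>a. \<eta> * matvec P s a"]
  by (simp add: mw_step_def[abs_def] sum_distrib_left mult_ac)



lemma xlnx_cont:
  fixes c :: real assumes c: "c > 0"
  shows "continuous_on {0..} (\<lambda>x. x * ln (x / c))"
proof -
  have lim: "((\<lambda>x. x * ln (x / c)) \<longlongrightarrow> 0) (at_right 0)"
  proof -
    have "((\<lambda>x. x * ln x - x * ln c) \<longlongrightarrow> 0) (at_right 0)" by real_asymp
    moreover have "\<forall>\<^sub>F x in at_right 0. x * ln x - x * ln c = x * ln (x / c)"
      using c by (auto simp: eventually_at_right_less ln_div algebra_simps intro!: eventually_mono[OF eventually_at_right_less])
    ultimately show ?thesis by (rule Lim_transform_eventually)
  qed
  show ?thesis unfolding continuous_on_eq_continuous_within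
  proof
    fix x :: real assume "x \<in> {0..}"
    show "continuous (at x within {0..}) (\<lambda>x. x * ln (x / c))"
    proof (cases "x = 0")
      case True
      show ?thesis unfolding True continuous_within at_within_Ici_at_right using lim by simp
    next
      case False
      hence "x > 0" using \<open>x \<in> {0..}\<close> by simp
      hence "continuous (at x) (\<lambda>x. x * ln (x / c))" using c by (intro continuous_intros) auto
      thus ?thesis by (rule continuous_at_imp_continuous_within)
    qed
  qed
qed

lemma nash_iff:
  fixes P :: "'a::finite \<Rightarrow> 'a \<Rightarrow> real"
  shows "s \<in> nash_set P \<longleftrightarrow> s \<in> prob_simplex \<and> (\<forall>a. matvec P s a \<le> 0)"
  unfolding nash_set_def by (auto simp: Max_le_iff)

lemma vec_nth_lambda: "vec_nth (vec_lambda s) = s" by (rule ext) simp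

lemma kl_proj_nash:
  fixes P :: "'a::finite \<Rightarrow> 'a \<Rightarrow> real"
  assumes ne: "nash_set P \<noteq> {}" and q: "\<forall>a. q a > 0"
  shows "kl_proj P q \<in> nash_set P"
proof -
  define N where "N = {v :: real^'a. vec_nth v \<in> nash_set P}"
  have N_eq: "N = {v. \<forall>a. 0 \<le> v $ a} \<inter> {v. (\<Sum>a\<in>UNIV. v $ a) = 1} \<inter> {v. \<forall>a. (\<Sum>b\<in>UNIV. P a b * v $ b) \<le> 0}"
    unfolding N_def nash_iff prob_simplex_def matvec_def by auto
  have "closed N" unfolding N_eq
    by (intro closed_Int closed_Collect_all closed_Collect_le closed_Collect_eq continuous_intros)
  moreover have "N \<subseteq> cball 0 1"
  proof
    fix v assume "v \<in> N"
    hence v: "\<forall>a. 0 \<le> v $ a" "(\<Sum>a\<in>UNIV. v $ a) = 1" unfolding N_eq by auto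
    have "norm v \<le> (\<Sum>a\<in>UNIV. \<bar>v $ a\<bar>)" by (rule norm_le_l1_cart)
    also have "\<dots> = 1" using v by simp
    finally show "v \<in> cball 0 1" by simp
  qed
  hence "bounded N" using bounded_cball bounded_subset by blast
  ultimately have comp: "compact N" using compact_eq_bounded_closed by blast
  obtain s where s: "s \<in> nash_set P" using ne by blast
  hence Nne: "N \<noteq> {}" unfolding N_def using vec_nth_lambda[of s] by (metis empty_iff mem_Collect_eq)
  have cont: "continuous_on N (\<lambda>v. KL (vec_nth v) q)"
    unfolding KL_alt
  proof (intro continuous_on_sum)
    fix a :: 'a
    have "continuous_on N (\<lambda>v. v $ a)" by (intro continuous_intros)
    moreover have "(\<lambda>v. v $ a) ` N \<subseteq> {0..}" unfolding N_eq by auto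
    ultimately show "continuous_on N (\<lambda>v. v $ a * ln (v $ a / q a))"
      using continuous_on_compose2[OF xlnx_cont[of "q a"]] q by blast
  qed
  obtain v where v: "v \<in> N" "\<forall>w\<in>N. KL (vec_nth v) q \<le> KL (vec_nth w) q"
    using continuous_attains_inf[OF comp Nne cont] by blast
  have "is_arg_min (\<lambda>\<sigma>. KL \<sigma> q) (\<lambda>\<sigma>. \<sigma> \<in> nash_set P) (vec_nth v)"
    unfolding is_arg_min_def
  proof (intro conjI notI)
    show "vec_nth v \<in> nash_set P" using v(1) unfolding N_def by simp
  next
    assume "\<exists>y. y \<in> nash_set P \<and> KL y q < KL (vec_nth v) q"
    then obtain y where y: "y \<in> nash_set P" "KL y q < KL (vec_nth v) q" by blast
    have "vec_lambda y \<in> N" using y(1) by (simp add: N_def vec_nth_lambda)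
    with v(2) y(2) show False unfolding vec_nth_lambda by (metis vec_nth_lambda not_le)
  qed
  hence "is_arg_min (\<lambda>\<sigma>. KL \<sigma> q) (\<lambda>\<sigma>. \<sigma> \<in> nash_set P) (kl_proj P q)"
    unfolding kl_proj_def by (rule someI[where P="is_arg_min (\<lambda>\<sigma>. KL \<sigma> q) (\<lambda>\<sigma>. \<sigma> \<in> nash_set P)"])
  thus ?thesis unfolding is_arg_min_def by blast
qed



lemma exp_abs_bounds:
  fixes x :: real
  shows "\<bar>x\<bar> \<le> \<bar>exp x - 1\<bar> * exp \<bar>x\<bar>" "exp x * \<bar>x\<bar> \<le> \<bar>exp x - 1\<bar> * exp \<bar>x\<bar>"
proof -
  have e1: "1 + x \<le> exp x" by (rule exp_ge_add_one_self)
  have e2: "1 - x \<le> exp (- x)" using exp_ge_add_one_self[of "-x"] by simp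
  have "\<bar>x\<bar> \<le> \<bar>exp x - 1\<bar> * exp \<bar>x\<bar> \<and> exp x * \<bar>x\<bar> \<le> \<bar>exp x - 1\<bar> * exp \<bar>x\<bar>"
  proof (cases "x \<ge> 0")
    case True
    have "exp x \<ge> 1" using True by simp
    moreover have "(exp x - 1) * 1 \<le> (exp x - 1) * exp x" using True \<open>exp x \<ge> 1\<close> by (intro mult_left_mono) auto
    moreover have "x * exp x \<le> (exp x - 1) * exp x" using e1 by (intro mult_right_mono) (auto simp: algebra_simps)
    moreover have "\<bar>exp x - 1\<bar> = exp x - 1" "\<bar>x\<bar> = x" using True \<open>exp x \<ge> 1\<close> by auto
    moreover have "x \<le> exp x - 1" using e1 by linarith
    ultimately show ?thesis by (simp add: mult.commute)
  next
    case False
    have ex1: "exp x < 1" using False by simp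
    have "\<bar>exp x - 1\<bar> * exp \<bar>x\<bar> = exp (-x) - 1" using False ex1
      by (simp add: algebra_simps exp_minus_inverse)
    moreover have "exp x * (- x) \<le> - x" using ex1 False by (intro mult_left_le_one_le) auto
    moreover have ax: "\<bar>x\<bar> = - x" using False by simp
    ultimately show ?thesis using e2 unfolding ax by linarith
  qed
  thus "\<bar>x\<bar> \<le> \<bar>exp x - 1\<bar> * exp \<bar>x\<bar>" "exp x * \<bar>x\<bar> \<le> \<bar>exp x - 1\<bar> * exp \<bar>x\<bar>" by auto
qed

lemma abs_le_sum_abs:
  fixes f :: "'a::finite \<Rightarrow> real"
  shows "\<bar>f a\<bar> \<le> (\<Sum>b\<in>UNIV. \<bar>f b\<bar>)"
  by (rule member_le_sum) auto

lemma ip_diff: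
  fixes P :: "'a::finite \<Rightarrow> 'a \<Rightarrow> real"
  shows "(\<Sum>a\<in>UNIV. (x a - y a) * matvec P v a)
       = (\<Sum>a\<in>UNIV. x a * matvec P v a) - (\<Sum>a\<in>UNIV. y a * matvec P v a)"
  by (simp add: left_diff_distrib sum_subtractf)

lemma matvec_diff:
  fixes P :: "'a::finite \<Rightarrow> 'a \<Rightarrow> real"
  shows "matvec P (\<lambda>b. x b - y b) a = matvec P x a - matvec P y a"
  unfolding matvec_def by (simp add: right_diff_distrib sum_subtractf)



theorem mainTheorem16:
  fixes P :: "'a::finite \<Rightarrow> 'a \<Rightarrow> real"
    and \<eta> :: real
    and pihat pis :: "nat \<Rightarrow> 'a \<Rightarrow> real"
    and t :: nat
  assumes skew: "skew_symmetric P"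
    and full_support: "\<forall>a. \<exists>\<pi>\<in>nash_set P. \<pi> a > 0"
    and eta_pos: "\<eta> > 0"
    and eta_L: "\<eta> * Lconst P < 1/2"
    and init_simplex: "pihat 1 \<in> prob_simplex"
    and init_pos: "\<forall>a. pihat 1 a > 0"
    and init_pi: "pis 0 = pihat 1"
    and upd_pi: "\<forall>s\<ge>1. pis s = mw_step \<eta> P (pihat s) (pis (s - 1))"
    and upd_hat: "\<forall>s\<ge>1. pihat (s + 1) = mw_step \<eta> P (pihat s) (pis s)"
    and t_ge: "t \<ge> 1"
  shows "Theta \<eta> (Lconst P) (kl_proj P (pihat 1)) (pihat t) (pis (t - 1))
           - Theta \<eta> (Lconst P) (kl_proj P (pihat 1)) (pihat (t + 1)) (pis t)
         \<ge> (1 - 4 * \<eta>^2 * (Lconst P)^2) / (sqrt 2 * \<eta> * Lconst P + 2 * exp (2 * \<eta> * Lconst P))^2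
             * (max (Kval \<eta> P (pihat t) (pis t)) (Kval \<eta> P (pihat (t + 1)) (pis t)))^2"
proof -
  define L where "L = Lconst P"
  have Lge: "\<forall>a b. \<bar>P a b\<bar> \<le> L" unfolding L_def using Lconst_ge by blast
  have L0: "L \<ge> 0" using Lge by (meson abs_ge_zero order_trans)
  have etaL: "\<eta> * L < 1/2" using eta_L unfolding L_def .
  have etaL0: "\<eta> * L \<ge> 0" using L0 eta_pos by simp
  have goodhat: "pihat (n + 1) \<in> prob_simplex \<and> (\<forall>a. pihat (n + 1) a > 0)" for n
  proof (induction n)
    case 0 thus ?case using init_simplex init_pos by simp
  next
    case (Suc n)
    have "pihat (Suc n + 1) = mw_step \<eta> P (pihat (n + 1)) (pis (n + 1))"
      using upd_hat[rule_format, of "n + 1"] by simp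
    thus ?case using mw_simplex[of "pihat (n + 1)"] Suc.IH by simp
  qed
  have goodhat': "pihat s \<in> prob_simplex" "\<forall>a. pihat s a > 0" if "s \<ge> 1" for s
    using goodhat[of "s - 1"] that by simp_all
  have goodpi: "pis s \<in> prob_simplex \<and> (\<forall>a. pis s a > 0)" for s
  proof (cases "s = 0")
    case True thus ?thesis using init_pi init_simplex init_pos by simp
  next
    case False
    hence "pis s = mw_step \<eta> P (pihat s) (pis (s - 1))" using upd_pi by simp
    thus ?thesis using mw_simplex[of "pihat s"] goodhat'[of s] False by simp
  qed
  define h where "h = pihat t"
  define r where "r = pis (t - 1)"
  define q where "q = pis t"
  define p where "p = pihat (t + 1)"
  define ps where "ps = kl_proj P (pihat 1)"
  have h: "h \<in> prob_simplex" "\<forall>a. h a > 0" unfolding h_def using goodhat' t_ge by auto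
  have r: "r \<in> prob_simplex" "\<forall>a. r a > 0" unfolding r_def using goodpi by auto
  have q: "q \<in> prob_simplex" "\<forall>a. q a > 0" unfolding q_def using goodpi by auto
  have p: "p \<in> prob_simplex" "\<forall>a. p a > 0" unfolding p_def using goodhat' t_ge by auto
  have qdef: "q = mw_step \<eta> P h r" unfolding q_def h_def r_def using upd_pi t_ge by simp
  have pdef: "p = mw_step \<eta> P h q" unfolding p_def h_def q_def using upd_hat t_ge by simp
  have ne: "nash_set P \<noteq> {}" using full_support by blast
  have psN: "ps \<in> nash_set P" unfolding ps_def by (rule kl_proj_nash[OF ne init_pos])
  have ps: "ps \<in> prob_simplex" using psN unfolding nash_set_def by simp
  define ip where "ip = (\<lambda>u s. \<Sum>a\<in>UNIV. u a * matvec P s a)"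
  define Zp where "Zp = (\<Sum>b\<in>UNIV. h b * exp (\<eta> * matvec P q b))"
  define Zq where "Zq = (\<Sum>b\<in>UNIV. h b * exp (\<eta> * matvec P r b))"
  have I1: "KL ps p = KL ps h - \<eta> * ip ps q + ln Zp"
    unfolding pdef ip_def Zp_def by (rule KL_mw[OF ps h(2)])
  have I2: "0 = KL p h - \<eta> * ip p q + ln Zp"
    using KL_mw[OF p(1) h(2), of \<eta> P q] unfolding pdef[symmetric] ip_def Zp_def KL_self by simp
  have I3: "KL p q = KL p h - \<eta> * ip p r + ln Zq"
    using KL_mw[OF p(1) h(2), of \<eta> P r] unfolding qdef[symmetric] ip_def Zq_def by simp
  have I4: "0 = KL q h - \<eta> * ip q r + ln Zq"
    using KL_mw[OF q(1) h(2), of \<eta> P r] unfolding qdef[symmetric] ip_def Zq_def KL_self by simp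
  have I5: "KL q p = KL q h - \<eta> * ip q q + ln Zp"
    using KL_mw[OF q(1) h(2), of \<eta> P q] unfolding pdef[symmetric] ip_def Zp_def by simp
  have I6: "KL h p = - \<eta> * ip h q + ln Zp"
    using KL_mw[OF h(1) h(2), of \<eta> P q] unfolding pdef[symmetric] ip_def Zp_def KL_self by simp
  have qq: "ip q q = 0" unfolding ip_def by (rule skew_zero[OF skew])
  have psq: "ip ps q \<ge> 0" unfolding ip_def by (rule nash_nonneg[OF skew psN q(1)])
  define \<alpha> where "\<alpha> = (\<Sum>a\<in>UNIV. \<bar>p a - q a\<bar>)"
  define \<beta> where "\<beta> = (\<Sum>a\<in>UNIV. \<bar>q a - h a\<bar>)"
  define \<gamma> where "\<gamma> = (\<Sum>a\<in>UNIV. \<bar>h a - r a\<bar>)"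
  define b where "b = (\<Sum>a\<in>UNIV. \<bar>q a - r a\<bar>)"
  have \<alpha>0: "\<alpha> \<ge> 0" and \<beta>0: "\<beta> \<ge> 0" and \<gamma>0: "\<gamma> \<ge> 0" and b0: "b \<ge> 0"
    unfolding \<alpha>_def \<beta>_def \<gamma>_def b_def by (auto intro: sum_nonneg)
  have Pa1: "\<alpha>^2 \<le> 2 * KL p q" unfolding \<alpha>_def by (rule pinsker[OF p(1) q])
  have Pa2: "\<alpha>^2 \<le> 2 * KL q p"
  proof -
    have "\<alpha> = (\<Sum>a\<in>UNIV. \<bar>q a - p a\<bar>)" unfolding \<alpha>_def by (simp add: abs_minus_commute)
    thus ?thesis using pinsker[OF q(1) p] by simp
  qed
  have Pb: "\<beta>^2 \<le> 2 * KL q h" unfolding \<beta>_def by (rule pinsker[OF q(1) h])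
  have Pc: "\<gamma>^2 \<le> 2 * KL h r" unfolding \<gamma>_def by (rule pinsker[OF h(1) r])
  have btri: "b \<le> \<beta> + \<gamma>" unfolding b_def \<beta>_def \<gamma>_def
    by (simp only: sum.distrib[symmetric]) (intro sum_mono, simp add: abs_triangle_ineq[of "q _ - h _" "h _ - r _", simplified])
  have b2: "b^2 \<le> 4 * KL q h + 4 * KL h r"
  proof -
    have "b^2 \<le> (\<beta> + \<gamma>)^2" using btri b0 by (intro power_mono) auto
    also have "\<dots> \<le> 2 * \<beta>^2 + 2 * \<gamma>^2"
    proof -
      have "0 \<le> (\<beta> - \<gamma>)^2" by simp
      moreover have "(\<beta> + \<gamma>)^2 = 2 * \<beta>^2 + 2 * \<gamma>^2 - (\<beta> - \<gamma>)^2" by (simp add: power2_eq_square algebra_simps)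
      ultimately show ?thesis by linarith
    qed
    finally show ?thesis using Pb Pc by linarith
  qed
  define S where "S = KL p q + KL q p"
  define X where "X = (\<Sum>a\<in>UNIV. (p a - q a) * matvec P (\<lambda>b. q b - r b) a)"
  have Sid: "S = \<eta> * X"
  proof -
    have "X = ip p q - ip p r - ip q q + ip q r"
      unfolding X_def matvec_diff ip_def by (simp add: algebra_simps sum_subtractf sum.distrib)
    hence "\<eta> * X = \<eta> * (ip p q - ip p r - ip q q + ip q r)" by simp
    also have "\<dots> = \<eta> * ip p q - \<eta> * ip p r - \<eta> * ip q q + \<eta> * ip q r"
      by (simp add: algebra_simps)
    finally show ?thesis unfolding S_def using I2 I3 I4 I5 by linarith
  qed
  have Sup: "S \<le> \<eta> * L * \<alpha> * b"
  proof -
    have "\<bar>X\<bar> \<le> L * \<alpha> * b"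
      unfolding X_def \<alpha>_def b_def by (rule bilin_bound[OF Lge])
    hence "S \<le> \<eta> * (L * \<alpha> * b)" unfolding Sid using eta_pos by (intro mult_left_mono) auto
    thus ?thesis by (simp add: mult_ac)
  qed
  have Slow: "\<alpha>^2 \<le> S" using Pa1 Pa2 unfolding S_def by linarith
  have Sbound: "S \<le> (\<eta> * L * b)^2"
  proof (cases "\<alpha> = 0")
    case True
    have "0 \<le> (\<eta> * L * b)^2" by simp
    moreover have "S \<le> 0" using Sup True by simp
    ultimately show ?thesis by linarith
  next
    case False
    hence a0: "\<alpha> > 0" using \<alpha>0 by simp
    have "\<alpha> * \<alpha> \<le> (\<eta> * L * b) * \<alpha>" using Slow Sup by (simp add: power2_eq_square mult_ac)
    hence ab: "\<alpha> \<le> \<eta> * L * b" using a0 by simp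
    have "S \<le> (\<eta> * L * b) * \<alpha>" using Sup by (simp add: mult_ac)
    also have "\<dots> \<le> (\<eta> * L * b) * (\<eta> * L * b)" using ab etaL0 b0 by (intro mult_left_mono) auto
    finally show ?thesis by (simp add: power2_eq_square)
  qed
  define k where "k = \<eta>^2 * L^2"
  have k0: "k \<ge> 0" unfolding k_def by simp
  have k1: "4 * k < 1"
  proof -
    have "(\<eta> * L)^2 < (1/2)^2" using etaL etaL0 by (intro power_strict_mono) auto
    moreover have "(1/2::real)^2 = 1/4" by (simp add: power2_eq_square)
    ultimately have "\<eta>^2 * L^2 < 1/4" by (simp add: power_mult_distrib)
    thus ?thesis unfolding k_def by linarith
  qed
  have Sk: "S \<le> k * (4 * KL q h + 4 * KL h r)"
  proof -
    have "(\<eta> * L * b)^2 = k * b^2" unfolding k_def by (simp add: power_mult_distrib)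
    also have "\<dots> \<le> k * (4 * KL q h + 4 * KL h r)" using b2 k0 by (intro mult_left_mono) auto
    finally show ?thesis using Sbound by linarith
  qed
  define D where "D = KL p q + KL q h"
  have decomp: "KL ps h - KL ps p = \<eta> * ip ps q + KL p q + KL q h - S"
    using I1 I2 I3 I4 qq unfolding S_def using I5 by (simp add: algebra_simps)
  have part1: "Theta \<eta> L ps h r - Theta \<eta> L ps p q \<ge> (1 - 4 * k) * D"
  proof -
    have eq: "Theta \<eta> L ps h r - Theta \<eta> L ps p q = (KL ps h - KL ps p) + 4 * (k * KL h r) - 4 * (k * KL p q)"
      unfolding Theta_def k_def by (simp add: algebra_simps)
    have "\<eta> * ip ps q \<ge> 0" using eta_pos psq by simp
    moreover have "k * (4 * KL q h + 4 * KL h r) = 4 * (k * KL q h) + 4 * (k * KL h r)" by (simp add: algebra_simps)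
    moreover have "(1 - 4 * k) * D = KL p q + KL q h - 4 * (k * KL p q) - 4 * (k * KL q h)"
      unfolding D_def by (simp add: algebra_simps)
    ultimately show ?thesis unfolding eq decomp using Sk by linarith
  qed
  have D0: "D \<ge> 0" using KL_nonneg[OF p(1) q] KL_nonneg[OF q(1) h] unfolding D_def by simp
  have KL1: "KL p q \<ge> 0" using KL_nonneg[OF p(1) q] .
  have KL2: "KL q h \<ge> 0" using KL_nonneg[OF q(1) h] .
  define c where "c = ln Zp"
  have Zp0: "Zp > 0" unfolding Zp_def by (rule softmax_pos[OF h(2)])
  have expc: "exp c = Zp" unfolding c_def using Zp0 by simp
  have c_lo: "c \<ge> \<eta> * ip h q" using I6 KL_nonneg[OF h(1) p] unfolding c_def by linarith
  have c_hi: "c \<le> \<eta> * ip p q" using I2 KL_nonneg[OF p(1) h] unfolding c_def by linarith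
  have iph: "\<bar>ip h q\<bar> \<le> L * \<beta>"
  proof -
    have "ip h q = (\<Sum>a\<in>UNIV. (h a - q a) * matvec P q a)" unfolding ip_diff using qq unfolding ip_def by simp
    also have "\<bar>\<dots>\<bar> \<le> L * (\<Sum>a\<in>UNIV. \<bar>h a - q a\<bar>) * (\<Sum>b\<in>UNIV. \<bar>q b\<bar>)" by (rule bilin_bound[OF Lge])
    also have "\<dots> = L * \<beta>" unfolding \<beta>_def simplex_abs_sum[OF q(1)] by (simp add: abs_minus_commute)
    finally show ?thesis .
  qed
  have ipp: "\<bar>ip p q\<bar> \<le> L * \<alpha>"
  proof -
    have "ip p q = (\<Sum>a\<in>UNIV. (p a - q a) * matvec P q a)" unfolding ip_diff using qq unfolding ip_def by simp
    also have "\<bar>\<dots>\<bar> \<le> L * (\<Sum>a\<in>UNIV. \<bar>p a - q a\<bar>) * (\<Sum>b\<in>UNIV. \<bar>q b\<bar>)" by (rule bilin_bound[OF Lge])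
    also have "\<dots> = L * \<alpha>" unfolding \<alpha>_def simplex_abs_sum[OF q(1)] by simp
    finally show ?thesis .
  qed
  have cabs: "\<bar>c\<bar> \<le> \<eta> * L * max \<alpha> \<beta>"
  proof -
    have f1: "\<eta> * \<bar>ip h q\<bar> \<le> \<eta> * (L * \<beta>)" using iph eta_pos by (intro mult_left_mono) auto
    have f2: "\<eta> * \<bar>ip p q\<bar> \<le> \<eta> * (L * \<alpha>)" using ipp eta_pos by (intro mult_left_mono) auto
    have f3: "\<eta> * (L * \<beta>) \<le> \<eta> * (L * max \<alpha> \<beta>)" "\<eta> * (L * \<alpha>) \<le> \<eta> * (L * max \<alpha> \<beta>)"
      using etaL0 eta_pos L0 by (auto intro!: mult_left_mono)
    have f4: "\<eta> * (- \<bar>ip h q\<bar>) \<le> \<eta> * ip h q" using eta_pos by (intro mult_left_mono) auto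
    have f5: "\<eta> * ip p q \<le> \<eta> * \<bar>ip p q\<bar>" using eta_pos by (intro mult_left_mono) auto
    have f6: "\<eta> * (- \<bar>ip h q\<bar>) = - (\<eta> * \<bar>ip h q\<bar>)" by simp
    have f7: "\<eta> * (L * max \<alpha> \<beta>) = \<eta> * L * max \<alpha> \<beta>" by (simp add: mult.assoc)
    have "- (\<eta> * L * max \<alpha> \<beta>) \<le> c" "c \<le> \<eta> * L * max \<alpha> \<beta>"
      using f1 f2 f3 f4 f5 f6 f7 c_lo c_hi by linarith+
    thus ?thesis by (simp add: abs_le_iff)
  qed
  have gb: "\<bar>\<eta> * matvec P q a\<bar> \<le> \<eta> * L" for a
    using matvec_bound[OF Lge q(1), of a] eta_pos by (simp add: abs_mult mult_left_mono)
  have gb2: "- (\<eta> * L) \<le> \<eta> * matvec P q b" "\<eta> * matvec P q b \<le> \<eta> * L" for b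
    using gb[of b] by (simp_all add: abs_le_iff)
  have cabs2: "\<bar>c\<bar> \<le> \<eta> * L"
  proof -
    have "Zp \<le> (\<Sum>b\<in>UNIV. h b * exp (\<eta> * L))" unfolding Zp_def
      using h(2) gb2 by (intro sum_mono mult_left_mono) (auto simp: less_imp_le)
    also have "\<dots> = exp (\<eta> * L)" using simplexD(2)[OF h(1)] by (simp add: sum_distrib_right[symmetric])
    finally have u: "exp c \<le> exp (\<eta> * L)" using expc by simp
    have "(\<Sum>b\<in>UNIV. h b * exp (- (\<eta> * L))) \<le> Zp" unfolding Zp_def
      using h(2) gb2 by (intro sum_mono mult_left_mono) (auto simp: less_imp_le)
    moreover have "(\<Sum>b\<in>UNIV. h b * exp (- (\<eta> * L))) = exp (- (\<eta> * L))" using simplexD(2)[OF h(1)] by (simp add: sum_distrib_right[symmetric])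
    ultimately have l: "exp (- (\<eta> * L)) \<le> exp c" using expc by simp
    show ?thesis using u l by (simp add: abs_le_iff)
  qed
  have pform: "p a = h a * exp (\<eta> * matvec P q a - c)" for a
    unfolding pdef mw_step_def Zp_def[symmetric] exp_diff expc by simp
  define B where "B = sqrt 2 * \<eta> * L + 2 * exp (2 * \<eta> * L)"
  have sab: "\<alpha> + \<beta> \<le> 2 * sqrt D"
  proof -
    have "(\<alpha> + \<beta>)^2 \<le> 2 * \<alpha>^2 + 2 * \<beta>^2"
    proof -
      have "0 \<le> (\<alpha> - \<beta>)^2" by simp
      moreover have "(\<alpha> + \<beta>)^2 = 2 * \<alpha>^2 + 2 * \<beta>^2 - (\<alpha> - \<beta>)^2" by (simp add: power2_eq_square algebra_simps)
      ultimately show ?thesis by linarith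
    qed
    also have "\<dots> \<le> 4 * D" using Pa1 Pb unfolding D_def distrib_left by linarith
    finally have "\<alpha> + \<beta> \<le> sqrt (4 * D)" by (rule real_le_rsqrt)
    also have "sqrt (4 * D) = 2 * sqrt D" by (simp add: real_sqrt_mult)
    finally show ?thesis .
  qed
  have smax: "max \<alpha> \<beta> \<le> sqrt 2 * sqrt D"
  proof -
    have "(max \<alpha> \<beta>)^2 \<le> 2 * D"
    proof (cases "\<alpha> \<le> \<beta>")
      case True thus ?thesis using Pa1 Pb KL1 KL2 unfolding D_def distrib_left max_def by simp
    next
      case False thus ?thesis using Pa1 Pb KL1 KL2 unfolding D_def distrib_left max_def by simp
    qed
    hence "max \<alpha> \<beta> \<le> sqrt (2 * D)" by (rule real_le_rsqrt)
    thus ?thesis by (simp add: real_sqrt_mult)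
  qed
  have pt: "w a * \<bar>\<eta> * matvec P q a\<bar> \<le> B * sqrt D" if w: "w = h \<or> w = p" for w a
  proof -
    define x where "x = \<eta> * matvec P q a - c"
    have xb: "\<bar>x\<bar> \<le> 2 * \<eta> * L" unfolding x_def using gb[of a] cabs2 by (simp add: abs_le_iff)
    have ha: "h a > 0" using h(2) by simp
    have pha: "\<bar>p a - h a\<bar> = h a * \<bar>exp x - 1\<bar>"
    proof -
      have "\<bar>p a - h a\<bar> = \<bar>h a * (exp x - 1)\<bar>" unfolding pform x_def[symmetric] by (simp add: algebra_simps)
      also have "\<dots> = h a * \<bar>exp x - 1\<bar>" using ha by (simp add: abs_mult)
      finally show ?thesis .
    qed
    have E: "exp \<bar>x\<bar> \<le> exp (2 * \<eta> * L)" using xb by simp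
    have wx: "w a * \<bar>x\<bar> \<le> exp (2 * \<eta> * L) * \<bar>p a - h a\<bar>"
    proof -
      have "w a * \<bar>x\<bar> \<le> h a * (\<bar>exp x - 1\<bar> * exp \<bar>x\<bar>)"
        using w
      proof
        assume "w = h" thus ?thesis using exp_abs_bounds(1)[of x] ha by (simp add: mult_left_mono)
      next
        assume "w = p"
        hence "w a * \<bar>x\<bar> = h a * (exp x * \<bar>x\<bar>)" using pform[of a] unfolding x_def by simp
        moreover have "h a * (exp x * \<bar>x\<bar>) \<le> h a * (\<bar>exp x - 1\<bar> * exp \<bar>x\<bar>)"
          using exp_abs_bounds(2)[of x] ha by (intro mult_left_mono) auto
        ultimately show ?thesis by linarith
      qed
      also have "\<dots> \<le> h a * (\<bar>exp x - 1\<bar> * exp (2 * \<eta> * L))"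
        using E ha by (intro mult_left_mono) auto
      also have "\<dots> = exp (2 * \<eta> * L) * \<bar>p a - h a\<bar>" unfolding pha by simp
      finally show ?thesis .
    qed
    have w1: "w a \<le> 1" "w a \<ge> 0" using w simplex_le1[OF h(1)] simplex_le1[OF p(1)] simplexD(1)[OF h(1)] simplexD(1)[OF p(1)] by auto
    have t1: "\<bar>\<eta> * matvec P q a\<bar> \<le> \<bar>x\<bar> + \<bar>c\<bar>" unfolding x_def by linarith
    have t2: "w a * \<bar>\<eta> * matvec P q a\<bar> \<le> w a * (\<bar>x\<bar> + \<bar>c\<bar>)"
      using w1 t1 by (intro mult_left_mono) auto
    have t3: "w a * \<bar>c\<bar> \<le> \<bar>c\<bar>" using w1 by (simp add: mult_left_le_one_le)
    have t4: "\<bar>p a - h a\<bar> \<le> \<alpha> + \<beta>"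
    proof -
      have "\<bar>p a - h a\<bar> \<le> \<bar>p a - q a\<bar> + \<bar>q a - h a\<bar>" by linarith
      thus ?thesis unfolding \<alpha>_def \<beta>_def
        using abs_le_sum_abs[of "\<lambda>a. p a - q a" a] abs_le_sum_abs[of "\<lambda>a. q a - h a" a] by linarith
    qed
    have t5: "exp (2 * \<eta> * L) * \<bar>p a - h a\<bar> \<le> exp (2 * \<eta> * L) * (2 * sqrt D)"
      using sab t4 by (intro mult_left_mono) auto
    have t6: "\<bar>c\<bar> \<le> \<eta> * L * (sqrt 2 * sqrt D)"
      using cabs smax etaL0 by (meson mult_left_mono order_trans)
    have t7: "exp (2 * \<eta> * L) * (2 * sqrt D) + \<eta> * L * (sqrt 2 * sqrt D) = B * sqrt D"
      unfolding B_def by (simp add: algebra_simps)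
    have t8: "w a * (\<bar>x\<bar> + \<bar>c\<bar>) = w a * \<bar>x\<bar> + w a * \<bar>c\<bar>" by (simp add: algebra_simps)
    show ?thesis using t2 t3 t5 t6 t7 t8 wx by linarith
  qed
  have Kb: "Kval \<eta> P w q \<le> B * sqrt D" if "w = h \<or> w = p" for w
    unfolding Kval_def using pt[OF that] by (simp add: Max_le_iff)
  have K0: "Kval \<eta> P h q \<ge> 0"
  proof -
    have "h undefined * \<bar>\<eta> * matvec P q undefined\<bar> \<le> Kval \<eta> P h q"
      unfolding Kval_def by (rule Max_ge) auto
    moreover have "0 \<le> h undefined * \<bar>\<eta> * matvec P q undefined\<bar>" using h(2) by (simp add: less_imp_le)
    ultimately show ?thesis by linarith
  qed
  define M where "M = max (Kval \<eta> P h q) (Kval \<eta> P p q)"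
  have M0: "M \<ge> 0" unfolding M_def using K0 by simp
  have MB: "M \<le> B * sqrt D" unfolding M_def using Kb by auto
  have B0: "B > 0"
  proof -
    have "sqrt 2 * \<eta> * L = sqrt 2 * (\<eta> * L)" by (simp add: mult.assoc)
    moreover have "sqrt 2 * (\<eta> * L) \<ge> 0" using etaL0 by simp
    ultimately have "sqrt 2 * \<eta> * L \<ge> 0" by linarith
    moreover have "2 * exp (2 * \<eta> * L) > 0" by simp
    ultimately show ?thesis unfolding B_def by linarith
  qed
  have M2: "M^2 \<le> B^2 * D"
  proof -
    have "M^2 \<le> (B * sqrt D)^2" using M0 MB by (intro power_mono) auto
    thus ?thesis using D0 by (simp add: power_mult_distrib)
  qed
  have "(1 - 4 * \<eta>^2 * L^2) / B^2 * M^2 = (1 - 4 * k) * (M^2 / B^2)" unfolding k_def by (simp add: mult.assoc)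
  also have "\<dots> \<le> (1 - 4 * k) * D"
  proof -
    have "M^2 / B^2 \<le> D" using M2 B0 by (simp add: pos_divide_le_eq mult.commute)
    thus ?thesis using k1 by (intro mult_left_mono) auto
  qed
  also have "\<dots> \<le> Theta \<eta> L ps h r - Theta \<eta> L ps p q" by (rule part1)
  finally have fin: "(1 - 4 * \<eta>^2 * L^2) / B^2 * M^2 \<le> Theta \<eta> L ps h r - Theta \<eta> L ps p q" .
  show ?thesis using fin unfolding B_def M_def L_def h_def r_def q_def p_def ps_def .
qed

end
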